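(* Let $C$ and $D$ be quasi-cyclic LDPC codes with circulant matrices (of a common size $z$ and common length), and let $H_{b(C)}$ and $H_{b(D)}$ be their base matrices. Let $C'$ (resp. $D'$) be the binary linear code with parity-check matrix $H_{b(C)}$ (resp. $H_{b(D)}$). If $C$ and $D$ satisfy the twisted condition $D^{\perp}\subset C$, then $C'$ and $D'$ satisfy the twisted condition $D'^{\perp}\subset C'$; equivalently, $H_{b(C)}\, H_{b(D)}^{T}=0$ over $\mathbb{F}_2$.
   Context: All codes are binary linear codes over $\mathbb{F}_2$. For a linear code $D\subseteq\mathbb{F}_2^n$, $D^{\perp}=\{d' : d\,d'^{T}=0\ \forall d\in D\}$. Codes $C,D$ satisfy the twisted condition if $D^{\perp}\subset C$; for parity-check matrices $H_C,H_D$ (so $C=\ker H_C$, $D=\ker H_D$) this is equivalent to $H_CH_D^T=0$. For a positive integer $z$, $I_z(1)$ is the $z\times z$ circulant permutation matrix of one circular right shift and $I_z(b)=I_z(1)^b$. A quasi-cyclic LDPC code with circulant matrices of size $z$ is given by a $J\times L$ model matrix $(p(i,j))$ with entries in $\{0,\dots,z-1\}\cup\{\infty\}$; its parity-check matrix is obtained by replacing each finite entry $p$ by $I_z(p)$ and each $\infty$ by the $z\times z$ zero matrix, and the code is the kernel of this matrix. Its base matrix is the $J\times L$ binary matrix with $1$ exactly at the positions where $p(i,j)\neq\infty$. *)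

theory Defs
  imports Main "HOL-Library.Z2"
begin

text \<open>Binary vectors of length n are functions nat => bit vanishing outside {0..<n};
  matrices are functions nat => nat => bit (row, column) together with explicit dimensions.\<close>

definition vecs :: "nat \<Rightarrow> (nat \<Rightarrow> bit) set" where
  "vecs n = {x. \<forall>i\<ge>n. x i = 0}"

definition ker_code :: "nat \<Rightarrow> nat \<Rightarrow> (nat \<Rightarrow> nat \<Rightarrow> bit) \<Rightarrow> (nat \<Rightarrow> bit) set" where
  "ker_code m n H = {x \<in> vecs n. \<forall>r<m. (\<Sum>c<n. H r c * x c) = 0}"

definition dual_code :: "nat \<Rightarrow> (nat \<Rightarrow> bit) set \<Rightarrow> (nat \<Rightarrow> bit) set" where
  "dual_code n D = {y \<in> vecs n. \<forall>d\<in>D. (\<Sum>i<n. d i * y i) = 0}"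

definition twisted :: "nat \<Rightarrow> (nat \<Rightarrow> bit) set \<Rightarrow> (nat \<Rightarrow> bit) set \<Rightarrow> bool" where
  "twisted n C D \<longleftrightarrow> dual_code n D \<subseteq> C"

text \<open>Model matrices: entries Some p (0 <= p < z) or None (standing for infinity).\<close>
definition model_matrix :: "nat \<Rightarrow> nat \<Rightarrow> nat \<Rightarrow> (nat \<Rightarrow> nat \<Rightarrow> nat option) \<Rightarrow> bool" where
  "model_matrix z J L P \<longleftrightarrow> (\<forall>i<J. \<forall>j<L. \<forall>p. P i j = Some p \<longrightarrow> p < z)"

text \<open>Circulant permutation matrix I_z(b) = I_z(1)^b, where I_z(1) is the identity
  circularly shifted right by one: entry (a, c) is 1 iff c = (a + b) mod z.\<close>
definition circ_perm :: "nat \<Rightarrow> nat \<Rightarrow> nat \<Rightarrow> nat \<Rightarrow> bit" where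
  "circ_perm z b a c = (if c = (a + b) mod z then 1 else 0)"

definition qc_matrix :: "nat \<Rightarrow> (nat \<Rightarrow> nat \<Rightarrow> nat option) \<Rightarrow> nat \<Rightarrow> nat \<Rightarrow> bit" where
  "qc_matrix z P r c = (case P (r div z) (c div z) of
      None \<Rightarrow> 0
    | Some p \<Rightarrow> circ_perm z p (r mod z) (c mod z))"

definition base_matrix :: "(nat \<Rightarrow> nat \<Rightarrow> nat option) \<Rightarrow> nat \<Rightarrow> nat \<Rightarrow> bit" where
  "base_matrix P i j = (if P i j = None then 0 else 1)"

definition qc_code :: "nat \<Rightarrow> nat \<Rightarrow> nat \<Rightarrow> (nat \<Rightarrow> nat \<Rightarrow> nat option) \<Rightarrow> (nat \<Rightarrow> bit) set" where
  "qc_code z J L P = ker_code (J * z) (L * z) (qc_matrix z P)"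

end

theory Submission
  imports Defs
begin

declare add_bit_eq_xor[simp del] mult_bit_eq_and[simp del]

definition dot :: "nat \<Rightarrow> (nat \<Rightarrow> bit) \<Rightarrow> (nat \<Rightarrow> bit) \<Rightarrow> bit" where
  "dot n u v = (\<Sum>i<n. u i * v i)"

lemma bit_add_self: "(a::bit) + a = 0"
  by (cases a) simp_all

lemma dot_lin_r: "dot n u (\<lambda>i. v i + a * w i) = dot n u v + a * dot n u w"
  unfolding dot_def by (simp add: algebra_simps sum.distrib sum_distrib_left)

lemma dot_lin_l: "dot n (\<lambda>i. v i + a * w i) u = dot n v u + a * dot n w u"
  unfolding dot_def by (simp add: algebra_simps sum.distrib sum_distrib_left)

lemma key:
  fixes r :: "nat \<Rightarrow> nat \<Rightarrow> bit"
  shows "\<forall>y c. (\<forall>x\<in>vecs n. (\<forall>k<m. dot n (r k) x = 0) \<longrightarrow> dot n y x = 0)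
     \<longrightarrow> (\<forall>k<m. dot n c (r k) = 0) \<longrightarrow> dot n c y = 0"
proof (induction m)
  case 0
  show ?case
  proof (intro allI impI)
    fix y c
    assume H: "\<forall>x\<in>vecs n. (\<forall>k<0. dot n (r k) x = 0) \<longrightarrow> dot n y x = 0"
    define x :: "nat \<Rightarrow> bit" where "x = (\<lambda>i. if i < n then c i else 0)"
    have "x \<in> vecs n" unfolding x_def vecs_def by auto
    then have "dot n y x = 0" using H by auto
    moreover have "dot n y x = dot n c y" unfolding dot_def x_def
      by (intro sum.cong) (auto simp: mult.commute)
    ultimately show "dot n c y = 0" by simp
  qed
next
  case (Suc m)
  show ?case
  proof (intro allI impI)
    fix y c
    assume H: "\<forall>x\<in>vecs n. (\<forall>k<Suc m. dot n (r k) x = 0) \<longrightarrow> dot n y x = 0"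
      and Hc: "\<forall>k<Suc m. dot n c (r k) = 0"
    show "dot n c y = 0"
    proof (cases "\<exists>x0\<in>vecs n. (\<forall>k<m. dot n (r k) x0 = 0) \<and> dot n (r m) x0 = 1")
      case True
      then obtain x0 where x0: "x0 \<in> vecs n" "\<forall>k<m. dot n (r k) x0 = 0" "dot n (r m) x0 = 1"
        by blast
      define y' where "y' = (\<lambda>i. y i + dot n y x0 * r m i)"
      have "\<forall>x\<in>vecs n. (\<forall>k<m. dot n (r k) x = 0) \<longrightarrow> dot n y' x = 0"
      proof (intro ballI impI)
        fix x assume xv: "x \<in> vecs n" and xk: "\<forall>k<m. dot n (r k) x = 0"
        define x' where "x' = (\<lambda>i. x i + dot n (r m) x * x0 i)"
        have "x' \<in> vecs n" using xv x0(1) unfolding x'_def vecs_def by auto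
        moreover have "\<forall>k<Suc m. dot n (r k) x' = 0"
        proof (intro allI impI)
          fix k assume "k < Suc m"
          then consider "k < m" | "k = m" by linarith
          then show "dot n (r k) x' = 0"
          proof cases
            case 1 then show ?thesis using xk x0(2) unfolding x'_def dot_lin_r by simp
          next
            case 2 then show ?thesis using x0(3) unfolding x'_def dot_lin_r by (simp add: bit_add_self)
          qed
        qed
        ultimately have "dot n y x' = 0" using H by blast
        then show "dot n y' x = 0" unfolding x'_def y'_def dot_lin_r dot_lin_l
          by (simp add: dot_def mult.commute sum_distrib_left algebra_simps)
      qed
      then have "dot n c y' = 0" using Suc.IH Hc by auto
      then show ?thesis using Hc unfolding y'_def dot_lin_r by simp
    next
      case False
      then have "\<forall>x\<in>vecs n. (\<forall>k<m. dot n (r k) x = 0) \<longrightarrow> dot n y x = 0"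
        using H less_Suc_eq by auto
      then show ?thesis using Suc.IH Hc by auto
    qed
  qed
qed

lemma mod_uniq:
  fixes b q t z :: nat
  assumes "b < z" "t < z" "z > 0"
  shows "(t = (b + q) mod z) \<longleftrightarrow> (b = (t + z - q mod z) mod z)"
proof
  assume h: "t = (b + q) mod z"
  have "(t + z - q mod z) mod z = ((b + q) mod z + (z - q mod z)) mod z"
    using h assms by (simp add: less_imp_le_nat)
  also have "\<dots> = (b + q mod z + (z - q mod z)) mod z" by (metis mod_add_left_eq mod_add_right_eq)
  also have "\<dots> = (b + z) mod z" using assms by (simp add: less_imp_le_nat)
  also have "\<dots> = b" using assms by simp
  finally show "b = (t + z - q mod z) mod z" by simp
next
  assume h: "b = (t + z - q mod z) mod z"
  have "(b + q) mod z = ((t + z - q mod z) mod z + q mod z) mod z"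
    using h by (simp add: mod_add_right_eq)
  also have "\<dots> = (t + z - q mod z + q mod z) mod z" by (metis mod_add_left_eq)
  also have "\<dots> = (t + z) mod z"
  proof -
    have "q mod z < z" using assms(3) by simp
    then have "t + z - q mod z + q mod z = t + z" by linarith
    then show ?thesis by simp
  qed
  also have "\<dots> = t" using assms by simp
  finally show "t = (b + q) mod z" by simp
qed

lemma circ_col:
  assumes "t < z" "z > 0"
  shows "(\<Sum>b<z. circ_perm z q b t) = 1"
proof -
  define b0 where "b0 = (t + z - q mod z) mod z"
  have "(\<Sum>b<z. circ_perm z q b t) = (\<Sum>b<z. if b = b0 then 1 else 0)"
    unfolding circ_perm_def b0_def using mod_uniq[OF _ assms(1,2)] by (intro sum.cong) auto
  also have "\<dots> = 1" using assms by (simp add: b0_def)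
  finally show ?thesis .
qed

lemma colsum:
  assumes "z > 0" "model_matrix z J L P" "k < J" "c < L * z"
  shows "(\<Sum>b<z. qc_matrix z P (k*z+b) c) = base_matrix P k (c div z)"
proof -
  have cd: "c div z < L" using assms by (simp add: less_mult_imp_div_less)
  have e: "\<And>b. b < z \<Longrightarrow> qc_matrix z P (k*z+b) c = (case P k (c div z) of None \<Rightarrow> 0
      | Some p \<Rightarrow> circ_perm z p b (c mod z))"
  proof -
    fix b assume "b < z"
    have h: "(k*z+b) div z = k" "(k*z+b) mod z = b" using \<open>b < z\<close> assms(1)
      by (metis add.commute div_mult_self3 div_less add_0 less_not_refl2 mod_mult_self3 mod_less)+
    show "qc_matrix z P (k*z+b) c = (case P k (c div z) of None \<Rightarrow> 0
      | Some p \<Rightarrow> circ_perm z p b (c mod z))" unfolding qc_matrix_def h by (rule refl)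
  qed
  show ?thesis
  proof (cases "P k (c div z)")
    case None
    then show ?thesis using e by (simp add: base_matrix_def)
  next
    case (Some q)
    then show ?thesis using e circ_col[of "c mod z" z q] assms(1) by (simp add: base_matrix_def)
  qed
qed

lemma rowsum:
  assumes "z > 0" "model_matrix z J L P" "i < J" "j < L"
  shows "(\<Sum>c\<in>{j*z..<j*z+z}. qc_matrix z P (i*z) c) = base_matrix P i j"
proof -
  have img: "{j*z..<j*z+z} = (\<lambda>a. j*z+a) ` {..<z}"
    apply (auto simp: image_iff)
    apply (rule_tac x="x - j*z" in bexI)
    by auto
  have "(\<Sum>c\<in>{j*z..<j*z+z}. qc_matrix z P (i*z) c) = (\<Sum>a<z. qc_matrix z P (i*z) (j*z+a))"
    unfolding img by (subst sum.reindex) (auto simp: inj_on_def)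
  also have "\<dots> = (\<Sum>a<z. case P i j of None \<Rightarrow> 0 | Some p \<Rightarrow> circ_perm z p 0 a)"
  proof (intro sum.cong refl)
    fix a assume "a \<in> {..<z}"
    then have "a < z" by simp
    have h1: "(j*z+a) div z = j" "(j*z+a) mod z = a" using \<open>a < z\<close> assms(1)
      by (metis add.commute div_mult_self3 div_less add_0 less_not_refl2 mod_mult_self3 mod_less)+
    moreover have h2: "(i*z) div z = i" "(i*z) mod z = 0" using assms(1) by simp_all
    show "qc_matrix z P (i*z) (j*z+a) = (case P i j of None \<Rightarrow> 0 | Some p \<Rightarrow> circ_perm z p 0 a)"
      unfolding qc_matrix_def h1 h2 by (rule refl)
  qed
  also have "\<dots> = base_matrix P i j"
  proof (cases "P i j")
    case None then show ?thesis by (simp add: base_matrix_def)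
  next
    case (Some p)
    then have "p < z" using assms unfolding model_matrix_def by blast
    then show ?thesis using Some by (simp add: base_matrix_def circ_perm_def)
  qed
  finally show ?thesis .
qed

theorem mainTheorem2:
  fixes z JC JD L :: nat and PC PD :: "nat \<Rightarrow> nat \<Rightarrow> nat option"
  assumes "z > 0"
    and "model_matrix z JC L PC"
    and "model_matrix z JD L PD"
    and "twisted (L * z) (qc_code z JC L PC) (qc_code z JD L PD)"
  shows "twisted L (ker_code JC L (base_matrix PC)) (ker_code JD L (base_matrix PD))
         \<and> (\<forall>i<JC. \<forall>k<JD. (\<Sum>j<L. base_matrix PC i j * base_matrix PD k j) = 0)"
proof -
  have A: "(\<Sum>c<L*z. qc_matrix z PC r c * qc_matrix z PD s c) = 0"
    if r: "r < JC*z" and s: "s < JD*z" for r s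
  proof -
    define y :: "nat \<Rightarrow> bit" where "y = (\<lambda>c. if c < L*z then qc_matrix z PD s c else 0)"
    have "y \<in> dual_code (L*z) (qc_code z JD L PD)"
      unfolding dual_code_def
    proof (intro CollectI conjI ballI)
      show "y \<in> vecs (L*z)" unfolding y_def vecs_def by auto
    next
      fix d assume "d \<in> qc_code z JD L PD"
      then have "(\<Sum>c<L*z. qc_matrix z PD s c * d c) = 0"
        using s unfolding qc_code_def ker_code_def by blast
      moreover have "(\<Sum>i<L*z. d i * y i) = (\<Sum>c<L*z. qc_matrix z PD s c * d c)"
        unfolding y_def by (intro sum.cong) (auto simp: mult.commute)
      ultimately show "(\<Sum>i<L*z. d i * y i) = 0" by simp
    qed
    then have "y \<in> qc_code z JC L PC" using assms(4) unfolding twisted_def by blast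
    then have "(\<Sum>c<L*z. qc_matrix z PC r c * y c) = 0"
      using r unfolding qc_code_def ker_code_def by blast
    moreover have "(\<Sum>c<L*z. qc_matrix z PC r c * y c) = (\<Sum>c<L*z. qc_matrix z PC r c * qc_matrix z PD s c)"
      unfolding y_def by (intro sum.cong) auto
    ultimately show ?thesis by simp
  qed
  have B: "(\<Sum>j<L. base_matrix PC i j * base_matrix PD k j) = 0" if i: "i < JC" and k: "k < JD" for i k
  proof -
    have Z: "(\<Sum>c<L*z. qc_matrix z PC (i*z) c * qc_matrix z PD (k*z+b) c) = 0" if "b < z" for b
    proof -
      have "Suc k * z \<le> JD * z" using k by (intro mult_le_mono1) simp
      then have "k*z+b < JD*z" using \<open>b < z\<close> by simp
      moreover have "i*z < JC*z" using i assms(1) by simp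
      ultimately show ?thesis
        using A by blast
    qed
    have Z0: "(\<Sum>b<z. \<Sum>c<L*z. qc_matrix z PC (i*z) c * qc_matrix z PD (k*z+b) c) = 0"
      using Z by simp
    have "(\<Sum>b<z. \<Sum>c<L*z. qc_matrix z PC (i*z) c * qc_matrix z PD (k*z+b) c)
        = (\<Sum>c<L*z. qc_matrix z PC (i*z) c * (\<Sum>b<z. qc_matrix z PD (k*z+b) c))"
      unfolding sum_distrib_left by (rule sum.swap)
    also have "\<dots> = (\<Sum>c<L*z. qc_matrix z PC (i*z) c * base_matrix PD k (c div z))"
      using colsum[OF assms(1,3) k] by (intro sum.cong) auto
    also have "\<dots> = (\<Sum>j<L. \<Sum>c\<in>{j*z..<j*z+z}. qc_matrix z PC (i*z) c * base_matrix PD k (c div z))"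
      by (rule sum.nat_group[symmetric])
    also have "\<dots> = (\<Sum>j<L. (\<Sum>c\<in>{j*z..<j*z+z}. qc_matrix z PC (i*z) c) * base_matrix PD k j)"
    proof (intro sum.cong refl)
      fix j assume "j \<in> {..<L}"
      have "\<And>c. c \<in> {j*z..<j*z+z} \<Longrightarrow> c div z = j"
      proof -
        fix c assume "c \<in> {j*z..<j*z+z}"
        then have "z * j \<le> c" "c < z * Suc j" by (auto simp: mult.commute)
        then show "c div z = j" by (rule div_nat_eqI)
      qed
      then show "(\<Sum>c\<in>{j*z..<j*z+z}. qc_matrix z PC (i*z) c * base_matrix PD k (c div z))
          = (\<Sum>c\<in>{j*z..<j*z+z}. qc_matrix z PC (i*z) c) * base_matrix PD k j"
        by (simp add: sum_distrib_right)
    qed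
    also have "\<dots> = (\<Sum>j<L. base_matrix PC i j * base_matrix PD k j)"
      using rowsum[OF assms(1,2) i] by (intro sum.cong) auto
    finally show ?thesis using Z0 by simp
  qed
  have T: "twisted L (ker_code JC L (base_matrix PC)) (ker_code JD L (base_matrix PD))"
    unfolding twisted_def
  proof
    fix y assume y: "y \<in> dual_code L (ker_code JD L (base_matrix PD))"
    have yv: "y \<in> vecs L" using y unfolding dual_code_def by blast
    have H: "\<forall>x\<in>vecs L. (\<forall>k<JD. dot L (base_matrix PD k) x = 0) \<longrightarrow> dot L y x = 0"
    proof (intro ballI impI)
      fix x assume "x \<in> vecs L" "\<forall>k<JD. dot L (base_matrix PD k) x = 0"
      then have "x \<in> ker_code JD L (base_matrix PD)" unfolding ker_code_def dot_def by blast
      then have "(\<Sum>i<L. x i * y i) = 0" using y unfolding dual_code_def by blast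
      then show "dot L y x = 0" unfolding dot_def by (simp add: mult.commute)
    qed
    have "\<forall>r<JC. (\<Sum>c<L. base_matrix PC r c * y c) = 0"
    proof (intro allI impI)
      fix r assume r: "r < JC"
      have "\<forall>k<JD. dot L (base_matrix PC r) (base_matrix PD k) = 0"
        using B r unfolding dot_def by blast
      then have "dot L (base_matrix PC r) y = 0" using key[of L JD "base_matrix PD"] H by blast
      then show "(\<Sum>c<L. base_matrix PC r c * y c) = 0" unfolding dot_def .
    qed
    then show "y \<in> ker_code JC L (base_matrix PC)" using yv unfolding ker_code_def by blast
  qed
  show ?thesis using T B by blast
qed

end
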